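(* Assume Assumption (I), and let $(L_k,u_k)$ be a sequence generated by Algorithm A. Then $(u_k)$ is bounded in $V$ and $(F'(u_k))$ is bounded in $V^*$.
   Context: Standing assumptions: $\Omega\subset\mathbb R^d$ bounded Lipschitz domain; $V$ real Hilbert space with inner product $\langle\cdot,\cdot\rangle_V$, $V\subset L^2(\Omega)$ with compact and dense embedding; $V^*$ dual. $F:V\to\mathbb R$ weakly lower semicontinuous, bounded below by an affine function, continuously Fréchet differentiable. $\alpha>0$, $\beta>0$, $p\in(0,1)$. Assumption (I): the standing assumptions hold; $F'$ is completely continuous ($u_n\rightharpoonup u$ in $V$ implies $F'(u_n)\to F'(u)$ in $V^*$); and $F':V\to V^*$ is Lipschitz continuous on bounded sets. For $\epsilon>0$, $\psi_\epsilon(t)=\frac p2\frac{t}{\epsilon^{2-p}}+(1-\frac p2)\epsilon^p$ if $t\in[0,\epsilon^2)$, $\psi_\epsilon(t)=t^{p/2}$ if $t\ge\epsilon^2$, $\psi_\epsilon'(t)=\frac p2\min(\epsilon^{p-2},t^{(p-2)/2})$. Algorithm A: choose a monotonically decreasing sequence $\epsilon_k\searrow0$, constants $\gamma>1$, $\tilde L>0$, and $u_0\in V$. Given $u_k$, for $L\ge0$ let problem (Q$_{k,L}$) be $\min_{u\in V} F(u_k)+F'(u_k)(u-u_k)+\frac L2\|u-u_k\|_V^2+\frac\alpha2\|u\|_V^2+\beta\int_\Omega\big[\psi_{\epsilon_k}(u_k^2)+\psi_{\epsilon_k}'(u_k^2)(u^2-u_k^2)\big]dx$ (strongly convex, unique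 minimizer), and let (D$_{k,L}$) be the condition $F(u_{k+1})\le F(u_k)+F'(u_k)(u_{k+1}-u_k)+L\|u_{k+1}-u_k\|_V^2$ for its minimizer $u_{k+1}$. $L_k$ is the smallest $L\in\{0\}\cup\{\tilde L\gamma^l:l\ge0\}$ for which (D$_{k,L}$) holds, and $u_{k+1}$ is the corresponding minimizer; then $k\mapsto k+1$. *)

theory Defs
  imports "HOL-Analysis.Analysis"
begin

definition psi :: "real \<Rightarrow> real \<Rightarrow> real \<Rightarrow> real" where
  "psi p \<epsilon> t = (if t < \<epsilon>\<^sup>2 then p / 2 * t / \<epsilon> powr (2 - p) + (1 - p / 2) * \<epsilon> powr p
                 else t powr (p / 2))"

definition dpsi :: "real \<Rightarrow> real \<Rightarrow> real \<Rightarrow> real" where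
  "dpsi p \<epsilon> t = (if t < \<epsilon>\<^sup>2 then p / 2 * \<epsilon> powr (p - 2) else p / 2 * t powr ((p - 2) / 2))"

definition weak_conv :: "(nat \<Rightarrow> 'v::real_inner) \<Rightarrow> 'v \<Rightarrow> bool" where
  "weak_conv u x \<longleftrightarrow> (\<forall>w. (\<lambda>n. inner (u n) w) \<longlonglongrightarrow> inner x w)"

definition lipschitz_domain :: "'d::euclidean_space set \<Rightarrow> bool" where
  "lipschitz_domain \<Omega> \<longleftrightarrow> open \<Omega> \<and> connected \<Omega> \<and> \<Omega> \<noteq> {} \<and>
     (\<forall>x\<in>frontier \<Omega>. \<exists>r>0. \<exists>e::'d. \<exists>g::'d \<Rightarrow> real. \<exists>M. norm e = 1 \<and>
        (\<forall>y z. y \<bullet> e = 0 \<longrightarrow> z \<bullet> e = 0 \<longrightarrow> \<bar>g y - g z\<bar> \<le> M * norm (y - z)) \<and>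
        \<Omega> \<inter> ball x r = {y \<in> ball x r. y \<bullet> e < g (y - (y \<bullet> e) *\<^sub>R e)})"

definition in_L2 :: "'d::euclidean_space set \<Rightarrow> ('d \<Rightarrow> real) \<Rightarrow> bool" where
  "in_L2 \<Omega> f \<longleftrightarrow> f \<in> borel_measurable (lebesgue_on \<Omega>) \<and> integrable (lebesgue_on \<Omega>) (\<lambda>x. (f x)\<^sup>2)"

definition L2_dist_sq :: "'d::euclidean_space set \<Rightarrow> ('d \<Rightarrow> real) \<Rightarrow> ('d \<Rightarrow> real) \<Rightarrow> real" where
  "L2_dist_sq \<Omega> f g = integral\<^sup>L (lebesgue_on \<Omega>) (\<lambda>x. (f x - g x)\<^sup>2)"

definition compact_dense_embedding :: "'d::euclidean_space set \<Rightarrow> ('v::real_inner \<Rightarrow> 'd \<Rightarrow> real) \<Rightarrow> bool" where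
  "compact_dense_embedding \<Omega> \<iota> \<longleftrightarrow>
     (\<forall>a b u v x. \<iota> (a *\<^sub>R u + b *\<^sub>R v) x = a * \<iota> u x + b * \<iota> v x) \<and>
     (\<forall>u. in_L2 \<Omega> (\<iota> u)) \<and>
     (\<forall>u. (AE x in lebesgue_on \<Omega>. \<iota> u x = 0) \<longrightarrow> u = 0) \<and>
     (\<forall>s::nat \<Rightarrow> 'v. bounded (range s) \<longrightarrow>
        (\<exists>r w. strict_mono r \<and> in_L2 \<Omega> w \<and> (\<lambda>n. L2_dist_sq \<Omega> (\<iota> (s (r n))) w) \<longlonglongrightarrow> 0)) \<and>
     (\<forall>f. in_L2 \<Omega> f \<longrightarrow> (\<forall>\<delta>>0. \<exists>u. L2_dist_sq \<Omega> (\<iota> u) f < \<delta>))"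

definition Qobj :: "'d::euclidean_space set \<Rightarrow> ('v::real_inner \<Rightarrow> 'd \<Rightarrow> real) \<Rightarrow> ('v \<Rightarrow> real) \<Rightarrow>
    ('v \<Rightarrow> 'v \<Rightarrow>\<^sub>L real) \<Rightarrow> real \<Rightarrow> real \<Rightarrow> real \<Rightarrow> real \<Rightarrow> 'v \<Rightarrow> real \<Rightarrow> 'v \<Rightarrow> real" where
  "Qobj \<Omega> \<iota> F F' \<alpha> \<beta> p \<epsilon> uk L u =
     F uk + blinfun_apply (F' uk) (u - uk) + L / 2 * (norm (u - uk))\<^sup>2 + \<alpha> / 2 * (norm u)\<^sup>2
     + \<beta> * integral\<^sup>L (lebesgue_on \<Omega>)
         (\<lambda>x. psi p \<epsilon> ((\<iota> uk x)\<^sup>2) + dpsi p \<epsilon> ((\<iota> uk x)\<^sup>2) * ((\<iota> u x)\<^sup>2 - (\<iota> uk x)\<^sup>2))"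

definition condD :: "('v::real_normed_vector \<Rightarrow> real) \<Rightarrow> ('v \<Rightarrow> 'v \<Rightarrow>\<^sub>L real) \<Rightarrow> 'v \<Rightarrow> real \<Rightarrow> 'v \<Rightarrow> bool" where
  "condD F F' uk L w \<longleftrightarrow> F w \<le> F uk + blinfun_apply (F' uk) (w - uk) + L * (norm (w - uk))\<^sup>2"

definition Lcands :: "real \<Rightarrow> real \<Rightarrow> real set" where
  "Lcands Lt \<gamma> = {0} \<union> {Lt * \<gamma> ^ l | l. True}"

end

theory Submission
  imports Defs
begin

definition T :: "real \<Rightarrow> real \<Rightarrow> real \<Rightarrow> real" where
  "T q x y = x powr q + q * x powr (q - 1) * (y - x)"

lemma tangent:
  assumes q: "0 < q" "q < 1" and x: "x > 0" and y: "y \<ge> 0"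
  shows "y powr q \<le> T q x y"
proof (cases "y = 0")
  case True
  have "x powr (q-1) * x = x powr q" using x powr_add[of x "q-1" 1] by simp
  hence "T q x 0 = (1 - q) * x powr q" unfolding T_def by (simp add: algebra_simps)
  moreover have "x powr q > 0" using x by simp
  ultimately show ?thesis using True q by simp
next
  case False
  hence yp: "y > 0" using y by simp
  have Y: "y powr q * x powr (1 - q) \<le> q * y + (1 - q) * x"
    using Youngs_inequality_0[of q "1-q" y x] q x yp by simp
  have xx: "x powr (1 - q) > 0" using x by simp
  have e1: "x powr (q-1) * x powr (1-q) = 1" using x by (simp add: powr_add[symmetric])
  have e2: "x powr (q-1) * x = x powr q" using x powr_add[of x "q-1" 1] by simp
  have "y powr q = (y powr q * x powr (1 - q)) * x powr (q-1)" using e1 by (simp add: algebra_simps)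
  also have "\<dots> \<le> (q * y + (1 - q) * x) * x powr (q-1)"
    using Y by (intro mult_right_mono) auto
  also have "\<dots> = T q x y" unfolding T_def using e2 by (simp add: algebra_simps)
  finally show ?thesis .
qed

lemma Tmono:
  assumes q: "0 < q" "q < 1" and a: "a > 0" and "a \<le> b" and "s \<le> a"
  shows "T q a s \<le> T q b s"
proof -
  have b: "b > 0" using a assms by simp
  have 1: "a powr q \<le> T q b a" using tangent[OF q b] a by simp
  have 2: "b powr (q-1) \<le> a powr (q-1)" using a assms q by (intro powr_mono2') auto
  have "T q b s - T q a s = (T q b a - a powr q) + q * (a powr (q-1) - b powr (q-1)) * (a - s)"
    unfolding T_def by (simp add: algebra_simps)
  moreover have "q * (a powr (q-1) - b powr (q-1)) * (a - s) \<ge> 0"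
    using 2 q assms by (intro mult_nonneg_nonneg) auto
  ultimately show ?thesis using 1 by linarith
qed

lemma T_self: "x > 0 \<Longrightarrow> T q x x = x powr q" by (simp add: T_def)

lemma psi_T:
  assumes e: "e > 0" and t: "t \<ge> 0" and p: "0 < p"
  shows "psi p e t = T (p/2) (max t (e\<^sup>2)) t"
    and "dpsi p e t = p/2 * (max t (e\<^sup>2)) powr (p/2 - 1)"
proof -
  have E: "e\<^sup>2 = e powr 2" using e by (simp add: powr_numeral)
  have a: "(e\<^sup>2) powr (p/2) = e powr p" unfolding E powr_powr by simp
  have b: "(e\<^sup>2) powr (p/2 - 1) = e powr (p - 2)" unfolding E powr_powr by (simp add: algebra_simps)
  have c: "(p - 2) / 2 = p/2 - 1" by simp
  have d: "1 / e powr (2-p) = e powr (p-2)" using e by (simp add: powr_minus_divide[symmetric])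
  have f: "e\<^sup>2 * e powr (p-2) = e powr p" unfolding E using e powr_add[of e 2 "p-2"] by simp
  show "psi p e t = T (p/2) (max t (e\<^sup>2)) t"
  proof (cases "t < e\<^sup>2")
    case True
    have g: "p / 2 * t / e powr (2 - p) = p/2 * e powr (p-2) * t" by (simp flip: d)
    have "psi p e t = p/2 * e powr (p-2) * t + (1 - p / 2) * e powr p"
      unfolding psi_def using True by (subst g[symmetric]) simp
    also have "\<dots> = T (p/2) (max t (e\<^sup>2)) t" unfolding T_def using True a b f
      by (simp add: max_def field_simps)
    finally show ?thesis .
  next
    case False
    thus ?thesis unfolding psi_def T_def using e by (simp add: max_def)
  qed
  show "dpsi p e t = p/2 * (max t (e\<^sup>2)) powr (p/2 - 1)"
    unfolding dpsi_def c using b by (auto simp: max_def)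
qed


lemma meas_psi:
  assumes "f \<in> borel_measurable M"
  shows "(\<lambda>x. psi p e (f x)) \<in> borel_measurable M" "(\<lambda>x. dpsi p e (f x)) \<in> borel_measurable M"
  using assms unfolding psi_def dpsi_def by measurable


lemma T_lin: "T q m t + q * m powr (q - 1) * (s - t) = T q m s"
  unfolding T_def by (simp add: algebra_simps)

lemma psi_conc:
  assumes e: "e > 0" and s: "s \<ge> 0" and t: "t \<ge> 0" and p: "0 < p" "p < 1"
  shows "psi p e s \<le> psi p e t + dpsi p e t * (s - t)"
proof -
  have q: "0 < p/2" "p/2 < 1" using p by auto
  have e2: "e\<^sup>2 > 0" using e by simp
  have R: "psi p e t + dpsi p e t * (s - t) = T (p/2) (max t (e\<^sup>2)) s"
    unfolding psi_T[OF e t p(1)] psi_T(2)[OF e t p(1)] by (rule T_lin)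
  show ?thesis
  proof (cases "s \<ge> e\<^sup>2")
    case True
    hence "psi p e s = s powr (p/2)" using psi_T[OF e s p(1)] T_self[of s] e2 by (simp add: max_def)
    also have "\<dots> \<le> T (p/2) (max t (e\<^sup>2)) s" using tangent[OF q _ s, of "max t (e\<^sup>2)"] e2 by (simp add: less_max_iff_disj)
    finally show ?thesis using R by simp
  next
    case False
    hence "psi p e s = T (p/2) (e\<^sup>2) s" using psi_T[OF e s p(1)] by (simp add: max_def)
    also have "\<dots> \<le> T (p/2) (max t (e\<^sup>2)) s" using Tmono[OF q e2, of "max t (e\<^sup>2)" s] False by simp
    finally show ?thesis using R by simp
  qed
qed

lemma psi_mono_eps:
  assumes e: "0 < e'" "e' \<le> e" and t: "t \<ge> 0" and p: "0 < p" "p < 1"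
  shows "psi p e' t \<le> psi p e t"
proof -
  have q: "0 < p/2" "p/2 < 1" using p by auto
  have e0: "e > 0" using e by simp
  have e2: "e'\<^sup>2 > 0" "e'\<^sup>2 \<le> e\<^sup>2" using e by (auto intro: power_mono)
  show ?thesis
  proof (cases "t \<ge> e'\<^sup>2")
    case True
    hence "psi p e' t = t powr (p/2)" using psi_T[OF e(1) t p(1)] T_self[of t] e2 by (simp add: max_def)
    also have "\<dots> \<le> T (p/2) (max t (e\<^sup>2)) t" using tangent[OF q _ t, of "max t (e\<^sup>2)"] e0 by (simp add: less_max_iff_disj)
    finally show ?thesis using psi_T[OF e0 t p(1)] by simp
  next
    case False
    hence "psi p e' t = T (p/2) (e'\<^sup>2) t" using psi_T[OF e(1) t p(1)] by (simp add: max_def)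
    also have "\<dots> \<le> T (p/2) (max t (e\<^sup>2)) t" using Tmono[OF q e2(1), of "max t (e\<^sup>2)" t] False e2 by simp
    finally show ?thesis using psi_T[OF e0 t p(1)] by simp
  qed
qed

lemma psi_nonneg:
  assumes e: "e > 0" and t: "t \<ge> 0" and p: "0 < p" "p < 1"
  shows "0 \<le> psi p e t"
proof -
  have q: "0 < p/2" "p/2 < 1" using p by auto
  have "0 \<le> t powr (p/2)" by simp
  also have "\<dots> \<le> T (p/2) (max t (e\<^sup>2)) t" using tangent[OF q _ t, of "max t (e\<^sup>2)"] e
    by (simp add: less_max_iff_disj)
  finally show ?thesis using psi_T[OF e t p(1)] by simp
qed

lemma psi_upper:
  assumes e: "e > 0" and t: "t \<ge> 0" and p: "0 < p" "p < 1"
  shows "psi p e t \<le> 1 + t + (e\<^sup>2) powr (p/2)"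
proof (cases "t < e\<^sup>2")
  case True
  hence "psi p e t = T (p/2) (e\<^sup>2) t" using psi_T[OF e t p(1)] by (simp add: max_def)
  also have "\<dots> \<le> (e\<^sup>2) powr (p/2)" unfolding T_def using True p
    by (simp add: mult_nonneg_nonpos)
  finally show ?thesis using t by simp
next
  case False
  hence "psi p e t = t powr (p/2)" unfolding psi_def by simp
  also have "\<dots> \<le> 1 + t"
  proof (cases "t \<ge> 1")
    case True
    hence "t powr (p/2) \<le> t powr 1" using p by (intro powr_mono) auto
    thus ?thesis using True by simp
  next
    case False
    hence "t powr (p/2) \<le> 1" using p t by (smt (verit, ccfv_SIG) half_gt_zero powr01_less_one powr_eq_0_iff)
    thus ?thesis using t by simp
  qed
  finally show ?thesis using powr_ge_zero[of "e\<^sup>2" "p/2"] by linarith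
qed

lemma dpsi_bounds:
  assumes e: "e > 0" and t: "t \<ge> 0" and p: "0 < p" "p < 1"
  shows "0 \<le> dpsi p e t" "dpsi p e t \<le> p/2 * (e\<^sup>2) powr (p/2 - 1)"
proof -
  show "0 \<le> dpsi p e t" unfolding psi_T(2)[OF e t p(1)] using p by simp
  have "(max t (e\<^sup>2)) powr (p/2 - 1) \<le> (e\<^sup>2) powr (p/2 - 1)"
    using e p by (intro powr_mono2') auto
  thus "dpsi p e t \<le> p/2 * (e\<^sup>2) powr (p/2 - 1)" using psi_T(2)[OF e t p(1)] p by simp
qed


lemma int_psi:
  assumes fin: "finite_measure M" and f: "f \<in> borel_measurable M" "integrable M (\<lambda>x. (f x)\<^sup>2)"
    and e: "e > 0" and p: "0 < p" "p < 1"
  shows "integrable M (\<lambda>x. psi p e ((f x)\<^sup>2))"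
proof -
  have i: "integrable M (\<lambda>x. 1 + (f x)\<^sup>2 + (e\<^sup>2) powr (p/2))"
    by (intro Bochner_Integration.integrable_add finite_measure.integrable_const[OF fin] f(2))
  have m: "(\<lambda>x. psi p e ((f x)\<^sup>2)) \<in> borel_measurable M" using meas_psi f(1) by measurable
  have a: "AE x in M. norm (psi p e ((f x)\<^sup>2)) \<le> norm (1 + (f x)\<^sup>2 + (e\<^sup>2) powr (p/2))"
    using psi_upper[OF e _ p] psi_nonneg[OF e _ p] by (auto intro!: AE_I2 simp: abs_of_nonneg add_nonneg_nonneg)
  show ?thesis by (rule Bochner_Integration.integrable_bound[OF i m a])
qed

lemma int_dpsi:
  assumes f: "f \<in> borel_measurable M" and g: "g \<in> borel_measurable M" "integrable M (\<lambda>x. (g x)\<^sup>2)"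
    and h: "h \<in> borel_measurable M" "integrable M (\<lambda>x. (h x)\<^sup>2)"
    and e: "e > 0" and p: "0 < p" "p < 1"
  shows "integrable M (\<lambda>x. dpsi p e ((f x)\<^sup>2) * (g x * h x))"
proof -
  define C where "C = p/2 * (e\<^sup>2) powr (p/2 - 1)"
  have i: "integrable M (\<lambda>x. C * ((g x)\<^sup>2 + (h x)\<^sup>2))"
    using g h by simp
  have m: "(\<lambda>x. dpsi p e ((f x)\<^sup>2) * (g x * h x)) \<in> borel_measurable M" using meas_psi f g h by measurable
  have a: "AE x in M. norm (dpsi p e ((f x)\<^sup>2) * (g x * h x)) \<le> norm (C * ((g x)\<^sup>2 + (h x)\<^sup>2))"
  proof (intro AE_I2)
    fix x
    have C0: "C \<ge> 0" unfolding C_def using p by simp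
    have d: "0 \<le> dpsi p e ((f x)\<^sup>2)" "dpsi p e ((f x)\<^sup>2) \<le> C"
      using dpsi_bounds[OF e _ p, of "(f x)\<^sup>2"] unfolding C_def by auto
    have gh: "\<bar>g x * h x\<bar> \<le> (g x)\<^sup>2 + (h x)\<^sup>2"
    proof -
      have "0 \<le> (\<bar>g x\<bar> - \<bar>h x\<bar>)\<^sup>2" by simp
      hence "2 * (\<bar>g x\<bar> * \<bar>h x\<bar>) \<le> (g x)\<^sup>2 + (h x)\<^sup>2"
        by (simp add: power2_eq_square algebra_simps)
      moreover have "0 \<le> \<bar>g x\<bar> * \<bar>h x\<bar>" by simp
      ultimately have "\<bar>g x\<bar> * \<bar>h x\<bar> \<le> (g x)\<^sup>2 + (h x)\<^sup>2" by linarith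
      moreover
      ultimately show ?thesis by (simp add: abs_mult)
    qed
    have "\<bar>dpsi p e ((f x)\<^sup>2) * (g x * h x)\<bar> = dpsi p e ((f x)\<^sup>2) * \<bar>g x * h x\<bar>"
      using d by (simp add: abs_mult)
    also have "\<dots> \<le> C * ((g x)\<^sup>2 + (h x)\<^sup>2)" using d gh by (intro mult_mono) auto
    finally show "norm (dpsi p e ((f x)\<^sup>2) * (g x * h x)) \<le> norm (C * ((g x)\<^sup>2 + (h x)\<^sup>2))"
      using C0 by simp
  qed
  show ?thesis by (rule Bochner_Integration.integrable_bound[OF i m a])
qed

lemma lin_zero:
  fixes A B :: real
  assumes "\<forall>t. 0 \<le> t * A + t\<^sup>2 * B"
  shows "A = 0"
proof (rule ccontr)
  assume A: "A \<noteq> 0"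
  define k where "k = \<bar>B\<bar> + 1"
  have k: "k > 0" "\<bar>B\<bar> < k" unfolding k_def by auto
  define t where "t = - A / k"
  have A2: "A\<^sup>2 > 0" using A by simp
  have "0 \<le> t * A + t\<^sup>2 * B" using assms by simp
  moreover have "t * A = - A\<^sup>2 / k" unfolding t_def by (simp add: power2_eq_square)
  moreover have "t\<^sup>2 * B = A\<^sup>2 * B / k\<^sup>2" unfolding t_def by (simp add: power_divide)
  moreover have "A\<^sup>2 * B / k\<^sup>2 < A\<^sup>2 / k"
  proof -
    have "A\<^sup>2 * B < A\<^sup>2 * k" using k A2 by (intro mult_strict_left_mono) auto
    hence "A\<^sup>2 * B / k\<^sup>2 < A\<^sup>2 * k / k\<^sup>2" using k by (intro divide_strict_right_mono) auto
    also have "A\<^sup>2 * k / k\<^sup>2 = A\<^sup>2 / k" using k by (simp add: power2_eq_square)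
    finally show ?thesis .
  qed
  ultimately show False by linarith
qed


definition Phi :: "'d::euclidean_space set \<Rightarrow> ('v::real_inner \<Rightarrow> 'd \<Rightarrow> real) \<Rightarrow> ('v \<Rightarrow> real) \<Rightarrow>
    real \<Rightarrow> real \<Rightarrow> real \<Rightarrow> real \<Rightarrow> 'v \<Rightarrow> real" where
  "Phi \<Omega> \<iota> F \<alpha> \<beta> p e v = F v + \<alpha> / 2 * (norm v)\<^sup>2 + \<beta> * integral\<^sup>L (lebesgue_on \<Omega>) (\<lambda>x. psi p e ((\<iota> v x)\<^sup>2))"

lemma key_step:
  fixes \<Omega> :: "'d::euclidean_space set" and \<iota> :: "'v::real_inner \<Rightarrow> 'd \<Rightarrow> real"
    and F' :: "'v \<Rightarrow> ('v \<Rightarrow>\<^sub>L real)"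
  assumes fin: "finite_measure (lebesgue_on \<Omega>)"
    and lin: "\<forall>a b u v x. \<iota> (a *\<^sub>R u + b *\<^sub>R v) x = a * \<iota> u x + b * \<iota> v x"
    and L2: "\<forall>u. in_L2 \<Omega> (\<iota> u)"
    and e: "e > 0" and p: "0 < p" "p < 1" and ab: "\<alpha> > 0" "\<beta> > 0" and L: "L \<ge> 0"
    and mini: "\<forall>v. Qobj \<Omega> \<iota> F F' \<alpha> \<beta> p e uk L w \<le> Qobj \<Omega> \<iota> F F' \<alpha> \<beta> p e uk L v"
    and D: "condD F F' uk L w"
  shows "Phi \<Omega> \<iota> F \<alpha> \<beta> p e w \<le> Phi \<Omega> \<iota> F \<alpha> \<beta> p e uk"
proof -
  define M where "M = lebesgue_on \<Omega>"
  define d where "d = uk - w"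
  define a where "a = \<iota> uk"
  define f where "f = \<iota> w"
  define g where "g = \<iota> d"
  define dp where "dp = (\<lambda>x. dpsi p e ((a x)\<^sup>2))"
  define ps where "ps = (\<lambda>x. psi p e ((a x)\<^sup>2))"
  have mL2: "\<And>u. \<iota> u \<in> borel_measurable M" "\<And>u. integrable M (\<lambda>x. (\<iota> u x)\<^sup>2)"
    using L2 unfolding in_L2_def M_def by auto
  have fin': "finite_measure M" using fin unfolding M_def .
  have ips: "integrable M ps" unfolding ps_def a_def by (rule int_psi[OF fin' mL2 e p])
  have idp: "\<And>u v. integrable M (\<lambda>x. dp x * (\<iota> u x * \<iota> v x))"
    unfolding dp_def a_def by (rule int_dpsi[OF mL2(1) mL2 mL2 e p])
  have iff: "integrable M (\<lambda>x. dp x * (f x * f x))" unfolding f_def by (rule idp)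
  have ifg: "integrable M (\<lambda>x. dp x * (f x * g x))" unfolding f_def g_def by (rule idp)
  have igg: "integrable M (\<lambda>x. dp x * (g x * g x))" unfolding g_def by (rule idp)
  have iaa: "integrable M (\<lambda>x. dp x * (a x * a x))" unfolding a_def by (rule idp)
  define A0 where "A0 = (\<lambda>x. ps x + dp x * ((f x)\<^sup>2 - (a x)\<^sup>2))"
  have A0_eq: "A0 = (\<lambda>x. ps x + dp x * (f x * f x) - dp x * (a x * a x))"
    unfolding A0_def by (auto simp: power2_eq_square algebra_simps)
  have iA0: "integrable M A0" unfolding A0_eq using ips iff iaa by simp
  define I0 where "I0 = integral\<^sup>L M A0"
  define J1 where "J1 = integral\<^sup>L M (\<lambda>x. dp x * (f x * g x))"
  define J2 where "J2 = integral\<^sup>L M (\<lambda>x. dp x * (g x * g x))"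
  have J2pos: "J2 \<ge> 0" unfolding J2_def dp_def
    using dpsi_bounds(1)[OF e _ p] by (intro integral_nonneg_AE AE_I2) simp
  have Qint: "integral\<^sup>L M (\<lambda>x. ps x + dp x * ((\<iota> (w + t *\<^sub>R d) x)\<^sup>2 - (a x)\<^sup>2))
      = I0 + t * (2 * J1) + t\<^sup>2 * J2" for t
  proof -
    have "\<iota> (w + t *\<^sub>R d) x = f x + t * g x" for x
      using lin[rule_format, of 1 w t d x] unfolding f_def g_def by simp
    hence E: "(\<lambda>x. ps x + dp x * ((\<iota> (w + t *\<^sub>R d) x)\<^sup>2 - (a x)\<^sup>2))
        = (\<lambda>x. A0 x + (t * 2) * (dp x * (f x * g x)) + t\<^sup>2 * (dp x * (g x * g x)))"
      unfolding A0_def by (auto simp: power2_eq_square algebra_simps)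
    have "integral\<^sup>L M (\<lambda>x. A0 x + (t * 2) * (dp x * (f x * g x)) + t\<^sup>2 * (dp x * (g x * g x)))
       = I0 + t * 2 * J1 + t\<^sup>2 * J2"
      unfolding I0_def J1_def J2_def using iA0 ifg igg by simp
    thus ?thesis unfolding E by simp
  qed
  define Q where "Q = (\<lambda>v. Qobj \<Omega> \<iota> F F' \<alpha> \<beta> p e uk L v)"
  define A where "A = blinfun_apply (F' uk) d - L * (norm d)\<^sup>2 + \<alpha> * inner w d + \<beta> * (2 * J1)"
  define B where "B = (L + \<alpha>) / 2 * (norm d)\<^sup>2 + \<beta> * J2"
  have Qw: "Q w = F uk - blinfun_apply (F' uk) d + L / 2 * (norm d)\<^sup>2 + \<alpha> / 2 * (norm w)\<^sup>2 + \<beta> * I0"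
  proof -
    have "w - uk = - d" unfolding d_def by simp
    hence "blinfun_apply (F' uk) (w - uk) = - blinfun_apply (F' uk) d" "norm (w - uk) = norm d"
      by (simp_all add: blinfun.minus_right)
    thus ?thesis unfolding Q_def Qobj_def I0_def A0_def ps_def dp_def a_def f_def M_def by simp
  qed
  have Qt: "Q (w + t *\<^sub>R d) = Q w + t * A + t\<^sup>2 * B" for t
  proof -
    have wd: "w + t *\<^sub>R d - uk = (t - 1) *\<^sub>R d" unfolding d_def by (simp add: algebra_simps)
    have n1: "(norm (w + t *\<^sub>R d - uk))\<^sup>2 = (t - 1)\<^sup>2 * (norm d)\<^sup>2"
      unfolding wd by (simp add: power_mult_distrib)
    have n2: "(norm (w + t *\<^sub>R d))\<^sup>2 = (norm w)\<^sup>2 + 2 * t * inner w d + t\<^sup>2 * (norm d)\<^sup>2"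
      unfolding power2_norm_eq_inner by (simp add: inner_add_left inner_add_right inner_commute power2_eq_square algebra_simps)
    have l1: "blinfun_apply (F' uk) (w + t *\<^sub>R d - uk) = (t - 1) * blinfun_apply (F' uk) d"
      unfolding wd by (simp add: blinfun.scaleR_right)
    have "Q (w + t *\<^sub>R d) = F uk + (t - 1) * blinfun_apply (F' uk) d + L / 2 * ((t - 1)\<^sup>2 * (norm d)\<^sup>2)
        + \<alpha> / 2 * ((norm w)\<^sup>2 + 2 * t * inner w d + t\<^sup>2 * (norm d)\<^sup>2) + \<beta> * (I0 + t * (2 * J1) + t\<^sup>2 * J2)"
      unfolding Q_def Qobj_def n1 n2 l1 Qint[symmetric] unfolding ps_def dp_def a_def M_def by simp
    thus ?thesis unfolding Qw A_def B_def by (simp add: power2_eq_square algebra_simps)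
  qed
  have "\<forall>t. 0 \<le> t * A + t\<^sup>2 * B"
  proof
    fix t
    have "Q w \<le> Q (w + t *\<^sub>R d)" using mini unfolding Q_def by blast
    thus "0 \<le> t * A + t\<^sup>2 * B" using Qt[of t] by simp
  qed
  hence A0': "A = 0" by (rule lin_zero)
  have "Q uk = Q w + B" using Qt[of 1] A0' unfolding d_def by simp
  moreover have "Q uk = Phi \<Omega> \<iota> F \<alpha> \<beta> p e uk"
    unfolding Q_def Qobj_def Phi_def by simp
  moreover have "Phi \<Omega> \<iota> F \<alpha> \<beta> p e w \<le> Q w + L / 2 * (norm d)\<^sup>2"
  proof -
    have F1: "F w \<le> F uk - blinfun_apply (F' uk) d + L * (norm d)\<^sup>2"
    proof -
      have "w - uk = - d" unfolding d_def by simp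
      thus ?thesis using D unfolding condD_def by (simp add: blinfun.minus_right)
    qed
    have "integral\<^sup>L M (\<lambda>x. psi p e ((f x)\<^sup>2)) \<le> I0" unfolding I0_def
    proof (rule integral_mono)
      show "integrable M (\<lambda>x. psi p e ((f x)\<^sup>2))" unfolding f_def by (rule int_psi[OF fin' mL2 e p])
      show "integrable M A0" by (rule iA0)
      show "psi p e ((f x)\<^sup>2) \<le> A0 x" for x
        unfolding A0_def ps_def dp_def by (rule psi_conc[OF e _ _ p]) auto
    qed
    hence "\<beta> * integral\<^sup>L M (\<lambda>x. psi p e ((f x)\<^sup>2)) \<le> \<beta> * I0" using ab by simp
    thus ?thesis using F1 unfolding Phi_def Qw M_def f_def by simp
  qed
  moreover have "L / 2 * (norm d)\<^sup>2 \<le> B" unfolding B_def using ab J2pos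
    by (simp add: field_simps)
  ultimately show ?thesis by linarith
qed

theorem lemma7p4:
  fixes \<Omega> :: "'d::euclidean_space set"
    and \<iota> :: "'v::{real_inner, complete_space} \<Rightarrow> 'd \<Rightarrow> real"
    and F :: "'v \<Rightarrow> real"
    and F' :: "'v \<Rightarrow> ('v \<Rightarrow>\<^sub>L real)"
    and \<alpha> \<beta> p \<gamma> Lt :: real
    and \<epsilon> :: "nat \<Rightarrow> real"
    and u :: "nat \<Rightarrow> 'v"
    and L :: "nat \<Rightarrow> real"
  assumes dom: "lipschitz_domain \<Omega>" "bounded \<Omega>"
    and emb: "compact_dense_embedding \<Omega> \<iota>"
    and F_wlsc: "\<forall>s x. weak_conv s x \<longrightarrow> ereal (F x) \<le> liminf (\<lambda>n. ereal (F (s n)))"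
    and F_affine_lb: "\<exists>g::'v \<Rightarrow>\<^sub>L real. \<exists>c. \<forall>v. blinfun_apply g v + c \<le> F v"
    and F_deriv: "\<forall>v. (F has_derivative blinfun_apply (F' v)) (at v)"
    and F'_cont: "continuous_on UNIV F'"
    and F'_compl_cont: "\<forall>s x. weak_conv s x \<longrightarrow> (\<lambda>n. F' (s n)) \<longlonglongrightarrow> F' x"
    and F'_lip: "\<forall>B. bounded B \<longrightarrow> (\<exists>K. \<forall>x\<in>B. \<forall>y\<in>B. norm (F' x - F' y) \<le> K * norm (x - y))"
    and params: "\<alpha> > 0" "\<beta> > 0" "0 < p" "p < 1"
    and eps: "\<forall>k. \<epsilon> k > 0" "decseq \<epsilon>" "\<epsilon> \<longlonglongrightarrow> 0"
    and gam: "\<gamma> > 1" and Lt: "Lt > 0"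
    and Lk_cand: "\<forall>k. L k \<in> Lcands Lt \<gamma>"
    and step_min: "\<forall>k. \<forall>v. Qobj \<Omega> \<iota> F F' \<alpha> \<beta> p (\<epsilon> k) (u k) (L k) (u (Suc k))
                          \<le> Qobj \<Omega> \<iota> F F' \<alpha> \<beta> p (\<epsilon> k) (u k) (L k) v"
    and step_D: "\<forall>k. condD F F' (u k) (L k) (u (Suc k))"
    and step_smallest: "\<forall>k. \<forall>L'\<in>Lcands Lt \<gamma>. L' < L k \<longrightarrow>
           (\<forall>w. (\<forall>v. Qobj \<Omega> \<iota> F F' \<alpha> \<beta> p (\<epsilon> k) (u k) L' w \<le> Qobj \<Omega> \<iota> F F' \<alpha> \<beta> p (\<epsilon> k) (u k) L' v)
                \<longrightarrow> \<not> condD F F' (u k) L' w)"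
  shows "bounded (range u) \<and> bounded (range (\<lambda>k. F' (u k)))"
proof -
  have Oopen: "open \<Omega>" using dom(1) unfolding lipschitz_domain_def by simp
  have fin: "finite_measure (lebesgue_on \<Omega>)"
    using Oopen dom(2) by (intro finite_measure_lebesgue_on bounded_set_imp_lmeasurable) auto
  have lin: "\<forall>a b u v x. \<iota> (a *\<^sub>R u + b *\<^sub>R v) x = a * \<iota> u x + b * \<iota> v x"
    and L2: "\<forall>u. in_L2 \<Omega> (\<iota> u)" using emb unfolding compact_dense_embedding_def by auto
  have mL2: "\<And>v. \<iota> v \<in> borel_measurable (lebesgue_on \<Omega>)" "\<And>v. integrable (lebesgue_on \<Omega>) (\<lambda>x. (\<iota> v x)\<^sup>2)"
    using L2 unfolding in_L2_def by auto
  have Lpos: "L k \<ge> 0" for k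
    using Lk_cand[rule_format, of k] Lt gam unfolding Lcands_def by auto
  define P where "P = (\<lambda>k v. Phi \<Omega> \<iota> F \<alpha> \<beta> p (\<epsilon> k) v)"
  have step: "P k (u (Suc k)) \<le> P k (u k)" for k
    unfolding P_def
    by (rule key_step[OF fin lin L2 eps(1)[rule_format] params(3,4,1,2) Lpos])
       (use step_min step_D in auto)
  have epsm: "P (Suc k) v \<le> P k v" for k v
  proof -
    have le: "\<epsilon> (Suc k) \<le> \<epsilon> k" using eps(2) unfolding decseq_def by simp
    have "integral\<^sup>L (lebesgue_on \<Omega>) (\<lambda>x. psi p (\<epsilon> (Suc k)) ((\<iota> v x)\<^sup>2))
        \<le> integral\<^sup>L (lebesgue_on \<Omega>) (\<lambda>x. psi p (\<epsilon> k) ((\<iota> v x)\<^sup>2))"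
      using int_psi[OF fin mL2 eps(1)[rule_format] params(3,4)] psi_mono_eps[OF eps(1)[rule_format] le _ params(3,4)]
      by (intro integral_mono) auto
    thus ?thesis unfolding P_def Phi_def using params(2) by simp
  qed
  define C where "C = P 0 (u 0)"
  have Pk: "P k (u k) \<le> C" for k
  proof (induction k)
    case 0 show ?case unfolding C_def by simp
  next
    case (Suc k)
    have "P (Suc k) (u (Suc k)) \<le> P k (u (Suc k))" by (rule epsm)
    also have "\<dots> \<le> P k (u k)" by (rule step)
    finally show ?case using Suc by simp
  qed
  obtain g :: "'v \<Rightarrow>\<^sub>L real" and c where gc: "\<forall>v. blinfun_apply g v + c \<le> F v" using F_affine_lb by blast
  define S where "S = 2 * \<bar>C - c\<bar> + norm g"
  define R where "R = max 1 (2 * S / \<alpha>)"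
  have nb: "norm (u k) \<le> R" for k
  proof -
    define r where "r = norm (u k)"
    have r0: "r \<ge> 0" unfolding r_def by simp
    have I: "integral\<^sup>L (lebesgue_on \<Omega>) (\<lambda>x. psi p (\<epsilon> k) ((\<iota> (u k) x)\<^sup>2)) \<ge> 0"
      using psi_nonneg[OF eps(1)[rule_format] _ params(3,4)] by (intro integral_nonneg_AE AE_I2) simp
    have g1: "blinfun_apply g (u k) \<ge> - (norm g * r)"
      using norm_blinfun[of g "u k"] unfolding r_def by simp
    have "- (norm g * r) + c + \<alpha> / 2 * r\<^sup>2 \<le> C"
      using Pk[of k] gc[rule_format, of "u k"] g1 I params(2) unfolding P_def Phi_def r_def
      by (smt (verit) mult_nonneg_nonneg)
    hence H: "\<alpha> / 2 * r\<^sup>2 \<le> (\<bar>C - c\<bar> + norm g) * r + \<bar>C - c\<bar>" using r0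
      by (smt (verit) mult_right_mono norm_ge_zero)
    show ?thesis
    proof (rule ccontr)
      assume "\<not> norm (u k) \<le> R"
      hence rR: "r > R" unfolding r_def by simp
      hence r1: "r > 1" unfolding R_def by simp
      have "r > 2 * S / \<alpha>" using rR unfolding R_def by simp
      hence "\<alpha> * r > 2 * S" using params(1) by (simp add: field_simps)
      hence "\<alpha> * r * r > 2 * S * r" using r1 by (intro mult_strict_right_mono) auto
      hence "\<alpha> / 2 * r\<^sup>2 > S * r" by (simp add: power2_eq_square)
      moreover have "S * r \<ge> (\<bar>C - c\<bar> + norm g) * r + \<bar>C - c\<bar>"
        unfolding S_def using r1 mult_right_mono[of 1 r "\<bar>C - c\<bar>"] by (simp add: algebra_simps)
      ultimately show False using H by linarith
    qed
  qed
  have bu: "bounded (range u)" unfolding bounded_iff using nb by auto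
  obtain K where K: "\<forall>x\<in>range u. \<forall>y\<in>range u. norm (F' x - F' y) \<le> K * norm (x - y)"
    using F'_lip bu by blast
  have "norm (F' (u k)) \<le> norm (F' (u 0)) + \<bar>K\<bar> * (2 * R)" for k
  proof -
    have "norm (F' (u k) - F' (u 0)) \<le> K * norm (u k - u 0)" using K by auto
    also have "\<dots> \<le> \<bar>K\<bar> * norm (u k - u 0)" by (simp add: mult_right_mono)
    also have "\<dots> \<le> \<bar>K\<bar> * (2 * R)"
      using norm_triangle_ineq4[of "u k" "u 0"] nb[of k] nb[of 0] by (intro mult_left_mono) auto
    finally show ?thesis using norm_triangle_ineq2[of "F' (u k)" "F' (u 0)"] by simp
  qed
  hence "bounded (range (\<lambda>k. F' (u k)))" unfolding bounded_iff by auto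
  with bu show ?thesis by simp
qed

end
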